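(* If a monoid $M$ is the limit of an inductive system of sofic monoids, then $M$ is sofic.
   Context: An inductive system of monoids $(M_i,\psi_{ji})$ consists of a directed set $I$, monoids $M_i$ ($i\in I$), and monoid morphisms $\psi_{ji}\colon M_i\to M_j$ for $i\le j$ with $\psi_{ii}=\mathrm{Id}_{M_i}$ and $\psi_{kj}\circ\psi_{ji}=\psi_{ki}$ for $i\le j\le k$. Its limit is the quotient of the disjoint union $\coprod_i M_i$ by the relation $x_i\sim x_j$ ($x_i\in M_i$, $x_j\in M_j$) iff there is $\ell\ge i,j$ with $\psi_{\ell i}(x_i)=\psi_{\ell j}(x_j)$, with multiplication $[x_i][y_j]=[\psi_{\ell i}(x_i)\psi_{\ell j}(y_j)]$ for any $\ell\ge i,j$. For a non-empty finite set $X$, $\mathrm{Map}(X)$ is the monoid of all maps $X\to X$ under composition (identity $\mathrm{Id}_X$) with the Hamming metric $d_X(f,g)=|\{x\in X : f(x)\ne g(x)\}|/|X|$. For a monoid $M$, finite $K\subset M$ and $\varepsilon,\alpha>0$, a map $\varphi\colon M\to\mathrm{Map}(X)$ is a $(K,\varepsilon)$-morphism if $d_X(\varphi(k_1k_2),\varphi(k_1)\varphi(k_2))\le\varepsilon$ for all $k_1,k_2\in K$ and $d_X(\varphi(1_M),\mathrm{Id}_X)\le\varepsilon$; it is $(K,\alpha)$-injective if $d_X(\varphi(k_1),\varphi(k_2))\ge\alpha$ for all distinct $k_1,k_2\in K$. $M$ is sofic if for every finite $K\subset M$ and every $\varepsilon>0$ there exist a non-empty finite set $X$ and a $(K,1-\varepsilon)$-injective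 $(K,\varepsilon)$-morphism $\varphi\colon M\to\mathrm{Map}(X)$. *)

theory Defs
  imports Complex_Main "HOL-Algebra.Group"
begin

text \<open>A non-empty finite set X is taken WLOG to be {..<n} with n > 0 (every non-empty
finite set is in bijection with such a set, and all notions below are invariant under
such bijections). An element of Map(X) is represented by a function nat => nat mapping
X into X; only its values on X matter.\<close>

definition maps_into :: "nat \<Rightarrow> (nat \<Rightarrow> nat) \<Rightarrow> bool" where
  "maps_into n f \<longleftrightarrow> (\<forall>x<n. f x < n)"

definition hamming :: "nat \<Rightarrow> (nat \<Rightarrow> nat) \<Rightarrow> (nat \<Rightarrow> nat) \<Rightarrow> real" where
  "hamming n f g = real (card {x. x < n \<and> f x \<noteq> g x}) / real n"

definition is_KE_morphism ::
  "('a, 'b) monoid_scheme \<Rightarrow> 'a set \<Rightarrow> real \<Rightarrow> nat \<Rightarrow> ('a \<Rightarrow> nat \<Rightarrow> nat) \<Rightarrow> bool" where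
  "is_KE_morphism M K \<epsilon> n \<phi> \<longleftrightarrow>
     (\<forall>k1\<in>K. \<forall>k2\<in>K. hamming n (\<phi> (k1 \<otimes>\<^bsub>M\<^esub> k2)) (\<phi> k1 \<circ> \<phi> k2) \<le> \<epsilon>) \<and>
     hamming n (\<phi> \<one>\<^bsub>M\<^esub>) id \<le> \<epsilon>"

definition is_K_injective ::
  "'a set \<Rightarrow> real \<Rightarrow> nat \<Rightarrow> ('a \<Rightarrow> nat \<Rightarrow> nat) \<Rightarrow> bool" where
  "is_K_injective K \<alpha> n \<phi> \<longleftrightarrow>
     (\<forall>k1\<in>K. \<forall>k2\<in>K. k1 \<noteq> k2 \<longrightarrow> hamming n (\<phi> k1) (\<phi> k2) \<ge> \<alpha>)"

definition sofic :: "('a, 'b) monoid_scheme \<Rightarrow> bool" where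
  "sofic M \<longleftrightarrow>
     (\<forall>K \<epsilon>. K \<subseteq> carrier M \<and> finite K \<and> \<epsilon> > 0 \<longrightarrow>
        (\<exists>n::nat. \<exists>\<phi>::'a \<Rightarrow> nat \<Rightarrow> nat. n > 0 \<and>
            (\<forall>m\<in>carrier M. maps_into n (\<phi> m)) \<and>
            is_K_injective K (1 - \<epsilon>) n \<phi> \<and> is_KE_morphism M K \<epsilon> n \<phi>))"

definition directed_set :: "'i set \<Rightarrow> ('i \<Rightarrow> 'i \<Rightarrow> bool) \<Rightarrow> bool" where
  "directed_set I leq \<longleftrightarrow> I \<noteq> {} \<and>
     (\<forall>i\<in>I. leq i i) \<and>
     (\<forall>i\<in>I. \<forall>j\<in>I. \<forall>k\<in>I. leq i j \<longrightarrow> leq j k \<longrightarrow> leq i k) \<and>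
     (\<forall>i\<in>I. \<forall>j\<in>I. \<exists>k\<in>I. leq i k \<and> leq j k)"

text \<open>psi j i is the transition morphism M i -> M j for i <= j.\<close>
definition inductive_system ::
  "'i set \<Rightarrow> ('i \<Rightarrow> 'i \<Rightarrow> bool) \<Rightarrow> ('i \<Rightarrow> ('a, 'b) monoid_scheme) \<Rightarrow> ('i \<Rightarrow> 'i \<Rightarrow> 'a \<Rightarrow> 'a) \<Rightarrow> bool" where
  "inductive_system I leq M \<psi> \<longleftrightarrow> directed_set I leq \<and>
     (\<forall>i\<in>I. monoid (M i)) \<and>
     (\<forall>i\<in>I. \<forall>j\<in>I. leq i j \<longrightarrow> \<psi> j i \<in> hom (M i) (M j) \<and> \<psi> j i \<one>\<^bsub>M i\<^esub> = \<one>\<^bsub>M j\<^esub>) \<and>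
     (\<forall>i\<in>I. \<forall>x\<in>carrier (M i). \<psi> i i x = x) \<and>
     (\<forall>i\<in>I. \<forall>j\<in>I. \<forall>k\<in>I. leq i j \<longrightarrow> leq j k \<longrightarrow>
        (\<forall>x\<in>carrier (M i). \<psi> k j (\<psi> j i x) = \<psi> k i x))"

definition lim_rel ::
  "'i set \<Rightarrow> ('i \<Rightarrow> 'i \<Rightarrow> bool) \<Rightarrow> ('i \<Rightarrow> ('a, 'b) monoid_scheme) \<Rightarrow> ('i \<Rightarrow> 'i \<Rightarrow> 'a \<Rightarrow> 'a)
     \<Rightarrow> (('i \<times> 'a) \<times> ('i \<times> 'a)) set" where
  "lim_rel I leq M \<psi> = {((i, x), (j, y)). i \<in> I \<and> j \<in> I \<and> x \<in> carrier (M i) \<and> y \<in> carrier (M j) \<and>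
      (\<exists>l\<in>I. leq i l \<and> leq j l \<and> \<psi> l i x = \<psi> l j y)}"

definition ind_limit ::
  "'i set \<Rightarrow> ('i \<Rightarrow> 'i \<Rightarrow> bool) \<Rightarrow> ('i \<Rightarrow> ('a, 'b) monoid_scheme) \<Rightarrow> ('i \<Rightarrow> 'i \<Rightarrow> 'a \<Rightarrow> 'a)
     \<Rightarrow> ('i \<times> 'a) set monoid" where
  "ind_limit I leq M \<psi> =
     \<lparr> carrier = (SIGMA i:I. carrier (M i)) // lim_rel I leq M \<psi>,
       mult = (\<lambda>A B. THE C. \<exists>i x j y l. (i, x) \<in> A \<and> (j, y) \<in> B \<and> l \<in> I \<and> leq i l \<and> leq j l \<and>
                 C = lim_rel I leq M \<psi> `` {(l, \<psi> l i x \<otimes>\<^bsub>M l\<^esub> \<psi> l j y)}),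
       one = (THE C. \<exists>i\<in>I. C = lim_rel I leq M \<psi> `` {(i, \<one>\<^bsub>M i\<^esub>)}) \<rparr>"

end

theory Submission
  imports Defs
begin

locale indsys =
  fixes I :: "'i set" and leq :: "'i \<Rightarrow> 'i \<Rightarrow> bool"
    and Ms :: "'i \<Rightarrow> ('a, 'b) monoid_scheme" and \<psi> :: "'i \<Rightarrow> 'i \<Rightarrow> 'a \<Rightarrow> 'a"
  assumes sys: "inductive_system I leq Ms \<psi>"
begin

abbreviation "R \<equiv> lim_rel I leq Ms \<psi>"
abbreviation "S \<equiv> (SIGMA i:I. carrier (Ms i))"
abbreviation "L \<equiv> ind_limit I leq Ms \<psi>"

lemma Ine: "I \<noteq> {}" using sys unfolding inductive_system_def directed_set_def by auto
lemma lrefl: "i \<in> I \<Longrightarrow> leq i i" using sys unfolding inductive_system_def directed_set_def by auto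
lemma ltrans: "i \<in> I \<Longrightarrow> j \<in> I \<Longrightarrow> k \<in> I \<Longrightarrow> leq i j \<Longrightarrow> leq j k \<Longrightarrow> leq i k"
  using sys unfolding inductive_system_def directed_set_def by blast
lemma lub: "i \<in> I \<Longrightarrow> j \<in> I \<Longrightarrow> \<exists>k\<in>I. leq i k \<and> leq j k"
  using sys unfolding inductive_system_def directed_set_def by blast
lemma mon: "i \<in> I \<Longrightarrow> monoid (Ms i)" using sys unfolding inductive_system_def by auto
lemma psi_hom: "i \<in> I \<Longrightarrow> j \<in> I \<Longrightarrow> leq i j \<Longrightarrow> \<psi> j i \<in> hom (Ms i) (Ms j)"
  using sys unfolding inductive_system_def by auto
lemma psi_one: "i \<in> I \<Longrightarrow> j \<in> I \<Longrightarrow> leq i j \<Longrightarrow> \<psi> j i \<one>\<^bsub>Ms i\<^esub> = \<one>\<^bsub>Ms j\<^esub>"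
  using sys unfolding inductive_system_def by auto
lemma psi_id: "i \<in> I \<Longrightarrow> x \<in> carrier (Ms i) \<Longrightarrow> \<psi> i i x = x"
  using sys unfolding inductive_system_def by auto
lemma psi_comp: "i \<in> I \<Longrightarrow> j \<in> I \<Longrightarrow> k \<in> I \<Longrightarrow> leq i j \<Longrightarrow> leq j k \<Longrightarrow> x \<in> carrier (Ms i)
   \<Longrightarrow> \<psi> k j (\<psi> j i x) = \<psi> k i x"
  using sys unfolding inductive_system_def by auto
lemma psi_closed: "i \<in> I \<Longrightarrow> j \<in> I \<Longrightarrow> leq i j \<Longrightarrow> x \<in> carrier (Ms i) \<Longrightarrow> \<psi> j i x \<in> carrier (Ms j)"
  using psi_hom unfolding hom_def by auto
lemma psi_mult: "i \<in> I \<Longrightarrow> j \<in> I \<Longrightarrow> leq i j \<Longrightarrow> x \<in> carrier (Ms i) \<Longrightarrow> y \<in> carrier (Ms i)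
  \<Longrightarrow> \<psi> j i (x \<otimes>\<^bsub>Ms i\<^esub> y) = \<psi> j i x \<otimes>\<^bsub>Ms j\<^esub> \<psi> j i y"
  using psi_hom unfolding hom_def by auto

lemma fin_ub: "finite F \<Longrightarrow> F \<subseteq> I \<Longrightarrow> \<exists>l\<in>I. \<forall>i\<in>F. leq i l"
proof (induction F rule: finite_induct)
  case empty then show ?case using Ine by auto
next
  case (insert a F)
  then obtain l where l: "l \<in> I" "\<forall>i\<in>F. leq i l" by auto
  obtain k where k: "k \<in> I" "leq a k" "leq l k" using lub[of a l] insert l by auto
  show ?case using k l insert ltrans by blast
qed

lemma R_iff: "((i,x),(j,y)) \<in> R \<longleftrightarrow> i \<in> I \<and> j \<in> I \<and> x \<in> carrier (Ms i) \<and> y \<in> carrier (Ms j) \<and>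
      (\<exists>l\<in>I. leq i l \<and> leq j l \<and> \<psi> l i x = \<psi> l j y)"
  unfolding lim_rel_def by auto

lemma R_equiv: "equiv S R"
proof (rule equivI)
  show "R \<subseteq> S \<times> S" unfolding lim_rel_def by auto
  show "refl_on S R" unfolding refl_on_def by (force simp: R_iff intro: lrefl)
  show "sym R" unfolding sym_def using R_iff by auto
  show "trans R" unfolding trans_def
  proof (clarify)
    fix i x j y k z assume a: "((i,x),(j,y)) \<in> R" "((j,y),(k,z)) \<in> R"
    then obtain l m where lm: "l \<in> I" "leq i l" "leq j l" "\<psi> l i x = \<psi> l j y"
      "m \<in> I" "leq j m" "leq k m" "\<psi> m j y = \<psi> m k z" and c: "i \<in> I" "j \<in> I" "k \<in> I"
      "x \<in> carrier (Ms i)" "y \<in> carrier (Ms j)" "z \<in> carrier (Ms k)"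
      using R_iff by meson
    obtain p where p: "p \<in> I" "leq l p" "leq m p" using lub lm by blast
    have "\<psi> p i x = \<psi> p l (\<psi> l i x)" using psi_comp c lm p by (metis ltrans)
    also have "\<dots> = \<psi> p j y" using psi_comp c lm p by (metis ltrans)
    also have "\<dots> = \<psi> p m (\<psi> m j y)" using psi_comp c lm p by (metis ltrans)
    also have "\<dots> = \<psi> p k z" using psi_comp c lm p by (metis ltrans)
    finally show "((i,x),(k,z)) \<in> R" using R_iff c p lm ltrans by meson
  qed
qed

lemma R_up: "((i,x),(j,y)) \<in> R \<Longrightarrow> l \<in> I \<Longrightarrow> leq i l \<Longrightarrow> leq j l \<Longrightarrow>
   \<exists>p\<in>I. leq l p \<and> \<psi> p i x = \<psi> p j y"
proof -
  assume a: "((i,x),(j,y)) \<in> R" "l \<in> I" "leq i l" "leq j l"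
  then obtain m where m: "m \<in> I" "leq i m" "leq j m" "\<psi> m i x = \<psi> m j y" and c: "i \<in> I" "j \<in> I"
      "x \<in> carrier (Ms i)" "y \<in> carrier (Ms j)" using R_iff by meson
  obtain p where p: "p \<in> I" "leq l p" "leq m p" using lub a m by blast
  have "\<psi> p i x = \<psi> p m (\<psi> m i x)" using psi_comp c m p by (metis ltrans)
  also have "\<dots> = \<psi> p j y" using psi_comp c m p by (metis ltrans)
  finally show ?thesis using p by blast
qed

lemma mult_L:
  assumes "(i,x) \<in> S" "(j,y) \<in> S" "l \<in> I" "leq i l" "leq j l"
  shows "R``{(i,x)} \<otimes>\<^bsub>L\<^esub> R``{(j,y)} = R``{(l, \<psi> l i x \<otimes>\<^bsub>Ms l\<^esub> \<psi> l j y)}"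
proof -
  let ?P = "\<lambda>C. \<exists>i' x' j' y' l'. (i', x') \<in> R``{(i,x)} \<and> (j', y') \<in> R``{(j,y)} \<and> l' \<in> I \<and> leq i' l' \<and> leq j' l' \<and>
                 C = R `` {(l', \<psi> l' i' x' \<otimes>\<^bsub>Ms l'\<^esub> \<psi> l' j' y')}"
  have ex: "?P (R``{(l, \<psi> l i x \<otimes>\<^bsub>Ms l\<^esub> \<psi> l j y)})"
    using assms equiv_class_self[OF R_equiv] by blast
  have un: "C = R``{(l, \<psi> l i x \<otimes>\<^bsub>Ms l\<^esub> \<psi> l j y)}" if "?P C" for C
  proof -
    obtain i' x' j' y' l' where h: "((i,x),(i', x')) \<in> R" "((j,y),(j', y')) \<in> R" "l' \<in> I" "leq i' l'" "leq j' l'"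
      "C = R `` {(l', \<psi> l' i' x' \<otimes>\<^bsub>Ms l'\<^esub> \<psi> l' j' y')}" using \<open>?P C\<close> by blast
    from h obtain m where m: "m \<in> I" "leq i m" "leq i' m" "\<psi> m i x = \<psi> m i' x'" and c1: "i' \<in> I" "x' \<in> carrier (Ms i')"
      using R_iff by meson
    from h obtain n where n: "n \<in> I" "leq j n" "leq j' n" "\<psi> n j y = \<psi> n j' y'" and c2: "j' \<in> I" "y' \<in> carrier (Ms j')"
      using R_iff by meson
    have c: "i \<in> I" "j \<in> I" "x \<in> carrier (Ms i)" "y \<in> carrier (Ms j)" using assms by auto
    obtain p where p: "p \<in> I" "\<forall>q\<in>{l,l',m,n}. leq q p" using fin_ub[of "{l,l',m,n}"] assms h m n by auto
    have lp: "leq l p" "leq l' p" "leq m p" "leq n p" using p by auto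
    have ip: "leq i p" "leq j p" "leq i' p" "leq j' p"
      using ltrans[of i l p] ltrans[of j l p] ltrans[of i' l' p] ltrans[of j' l' p] c c1 c2 assms h p lp by auto
    have xl: "\<psi> l i x \<in> carrier (Ms l)" "\<psi> l j y \<in> carrier (Ms l)" using psi_closed c assms by auto
    have xl': "\<psi> l' i' x' \<in> carrier (Ms l')" "\<psi> l' j' y' \<in> carrier (Ms l')" using psi_closed c1 c2 h by auto
    have e1: "\<psi> p l (\<psi> l i x \<otimes>\<^bsub>Ms l\<^esub> \<psi> l j y) = \<psi> p i x \<otimes>\<^bsub>Ms p\<^esub> \<psi> p j y"
      using psi_mult[OF assms(3) p(1) lp(1) xl] psi_comp[of i l p x] psi_comp[of j l p y] c assms lp p(1) by simp
    have e2: "\<psi> p l' (\<psi> l' i' x' \<otimes>\<^bsub>Ms l'\<^esub> \<psi> l' j' y') = \<psi> p i' x' \<otimes>\<^bsub>Ms p\<^esub> \<psi> p j' y'"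
      using psi_mult[OF h(3) p(1) lp(2) xl'] psi_comp[of i' l' p x'] psi_comp[of j' l' p y'] c1 c2 h lp p(1) by simp
    have e3: "\<psi> p i x = \<psi> p i' x'"
      using psi_comp[of i m p x] psi_comp[of i' m p x'] c c1 m lp p(1) by simp
    have e4: "\<psi> p j y = \<psi> p j' y'"
      using psi_comp[of j n p y] psi_comp[of j' n p y'] c c2 n lp p(1) by simp
    have cl1: "\<psi> l i x \<otimes>\<^bsub>Ms l\<^esub> \<psi> l j y \<in> carrier (Ms l)"
      using xl monoid.m_closed[OF mon[OF assms(3)]] by blast
    have cl2: "\<psi> l' i' x' \<otimes>\<^bsub>Ms l'\<^esub> \<psi> l' j' y' \<in> carrier (Ms l')"
      using xl' monoid.m_closed[OF mon[OF h(3)]] by blast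
    have "((l', \<psi> l' i' x' \<otimes>\<^bsub>Ms l'\<^esub> \<psi> l' j' y'), (l, \<psi> l i x \<otimes>\<^bsub>Ms l\<^esub> \<psi> l j y)) \<in> R"
      unfolding R_iff using cl1 cl2 e1 e2 e3 e4 p lp h assms by auto
    then show ?thesis using h(6) equiv_class_eq[OF R_equiv] by blast
  qed
  show ?thesis unfolding ind_limit_def apply simp
    apply (rule the_equality) using ex un by blast+
qed

lemma main:
  fixes M :: "('c,'d) monoid_scheme" and h
  assumes sof: "\<forall>i\<in>I. sofic (Ms i)" and mM: "monoid M" and hiso: "h \<in> iso M L"
  shows "sofic M"
  unfolding sofic_def
proof (intro allI impI)
  fix K \<epsilon> assume a: "K \<subseteq> carrier M \<and> finite K \<and> (\<epsilon>::real) > 0"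
  define K' where "K' = K \<union> (\<lambda>(a,b). a \<otimes>\<^bsub>M\<^esub> b) ` (K \<times> K) \<union> {\<one>\<^bsub>M\<^esub>}"
  have K'fin: "finite K'" using a unfolding K'_def by auto
  have K'c: "K' \<subseteq> carrier M" using a monoid.m_closed[OF mM] monoid.one_closed[OF mM] unfolding K'_def by auto
  have KK': "K \<subseteq> K'" "\<And>k1 k2. k1 \<in> K \<Longrightarrow> k2 \<in> K \<Longrightarrow> k1 \<otimes>\<^bsub>M\<^esub> k2 \<in> K'" "\<one>\<^bsub>M\<^esub> \<in> K'"
    unfolding K'_def by auto
  have cL: "carrier L = S // R" unfolding ind_limit_def by simp
  have hhom: "h \<in> hom M L" and hbij: "bij_betw h (carrier M) (carrier L)" using hiso unfolding iso_def by auto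
  have hc: "\<And>m. m \<in> carrier M \<Longrightarrow> h m \<in> S // R" using hhom cL unfolding hom_def by auto
  have hm: "\<And>m1 m2. m1 \<in> carrier M \<Longrightarrow> m2 \<in> carrier M \<Longrightarrow> h (m1 \<otimes>\<^bsub>M\<^esub> m2) = h m1 \<otimes>\<^bsub>L\<^esub> h m2"
    using hhom unfolding hom_def by auto
  define rep where "rep m = (SOME p. p \<in> S \<and> h m = R``{p})" for m
  have rep: "rep m \<in> S \<and> h m = R``{rep m}" if "m \<in> carrier M" for m
  proof -
    have "\<exists>p. p \<in> S \<and> h m = R``{p}" using hc[OF that] by (metis quotientE)
    then show ?thesis unfolding rep_def by (rule someI_ex)
  qed
  have Fsub: "fst ` rep ` K' \<subseteq> I" using rep K'c by force
  obtain l0 where l0: "l0 \<in> I" "\<forall>i\<in>fst ` rep ` K'. leq i l0"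
    using fin_ub[OF _ Fsub] K'fin by auto
  define z where "z m = \<psi> l0 (fst (rep m)) (snd (rep m))" for m
  have z: "z m \<in> carrier (Ms l0) \<and> h m = R``{(l0, z m)}" if "m \<in> K'" for m
  proof -
    obtain i x where ix: "rep m = (i,x)" by force
    have r: "(i,x) \<in> S" "h m = R``{(i,x)}" using rep[of m] that K'c ix by auto
    have le: "leq i l0" using l0 that ix by force
    have zc: "z m \<in> carrier (Ms l0)" unfolding z_def ix using psi_closed r l0 le by auto
    have "((i,x),(l0, z m)) \<in> R" unfolding R_iff
      using r zc l0 le lrefl psi_id[OF l0(1) zc] unfolding z_def ix by auto
    then show ?thesis using zc r equiv_class_eq[OF R_equiv] by auto
  qed
  have mulz: "R``{(l0, a)} \<otimes>\<^bsub>L\<^esub> R``{(l0, b)} = R``{(l0, a \<otimes>\<^bsub>Ms l0\<^esub> b)}"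
    if "a \<in> carrier (Ms l0)" "b \<in> carrier (Ms l0)" for a b
    using mult_L[of l0 a l0 b l0] that l0 lrefl psi_id by auto
  have zcl: "z k1 \<otimes>\<^bsub>Ms l0\<^esub> z k2 \<in> carrier (Ms l0)" if "k1 \<in> K'" "k2 \<in> K'" for k1 k2
    using z that monoid.m_closed[OF mon[OF l0(1)]] by blast
  have prod: "\<exists>p\<in>I. leq l0 p \<and> \<psi> p l0 (z (k1 \<otimes>\<^bsub>M\<^esub> k2)) = \<psi> p l0 (z k1 \<otimes>\<^bsub>Ms l0\<^esub> z k2)"
    if "k1 \<in> K" "k2 \<in> K" for k1 k2
  proof -
    have "h (k1 \<otimes>\<^bsub>M\<^esub> k2) = h k1 \<otimes>\<^bsub>L\<^esub> h k2" using hm that a by auto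
    also have "\<dots> = R``{(l0, z k1)} \<otimes>\<^bsub>L\<^esub> R``{(l0, z k2)}" using z[of k1] z[of k2] that KK'(1) by (simp add: subsetD)
    also have "\<dots> = R``{(l0, z k1 \<otimes>\<^bsub>Ms l0\<^esub> z k2)}" using z mulz that KK' by blast
    finally have "R``{(l0, z (k1 \<otimes>\<^bsub>M\<^esub> k2))} = R``{(l0, z k1 \<otimes>\<^bsub>Ms l0\<^esub> z k2)}"
      using z KK'(2)[OF that] by auto
    then have "((l0, z (k1 \<otimes>\<^bsub>M\<^esub> k2)), (l0, z k1 \<otimes>\<^bsub>Ms l0\<^esub> z k2)) \<in> R"
    proof -
      have kk: "k1 \<in> K'" "k2 \<in> K'" "k1 \<otimes>\<^bsub>M\<^esub> k2 \<in> K'" using KK' that by auto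
      have "(l0, z (k1 \<otimes>\<^bsub>M\<^esub> k2)) \<in> S" using z[OF kk(3)] l0 by auto
      moreover have "(l0, z k1 \<otimes>\<^bsub>Ms l0\<^esub> z k2) \<in> S" using zcl[OF kk(1,2)] l0 by auto
      ultimately show ?thesis using eq_equiv_class_iff[OF R_equiv] \<open>R``{(l0, z (k1 \<otimes>\<^bsub>M\<^esub> k2))} = _\<close> by blast
    qed
    then show ?thesis using R_up l0 lrefl by blast
  qed
  have unit: "\<exists>p\<in>I. leq l0 p \<and> \<psi> p l0 (z \<one>\<^bsub>M\<^esub>) = \<psi> p l0 \<one>\<^bsub>Ms l0\<^esub>"
  proof -
    have o: "\<one>\<^bsub>Ms l0\<^esub> \<in> carrier (Ms l0)" using monoid.one_closed[OF mon[OF l0(1)]] .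
    have z1: "z \<one>\<^bsub>M\<^esub> \<in> carrier (Ms l0)" "h \<one>\<^bsub>M\<^esub> = R``{(l0, z \<one>\<^bsub>M\<^esub>)}" using z[OF KK'(3)] by auto
    have "R``{(l0, \<one>\<^bsub>Ms l0\<^esub>)} \<in> carrier L" using cL o l0 by (auto intro: quotientI)
    then obtain m where m: "m \<in> carrier M" "h m = R``{(l0, \<one>\<^bsub>Ms l0\<^esub>)}"
      using bij_betw_imp_surj_on[OF hbij] by (metis imageE)
    have "h m = h (\<one>\<^bsub>M\<^esub> \<otimes>\<^bsub>M\<^esub> m)" using m monoid.l_one[OF mM] by simp
    also have "\<dots> = h \<one>\<^bsub>M\<^esub> \<otimes>\<^bsub>L\<^esub> h m" using hm m monoid.one_closed[OF mM] by auto
    also have "\<dots> = R``{(l0, z \<one>\<^bsub>M\<^esub>)} \<otimes>\<^bsub>L\<^esub> R``{(l0, \<one>\<^bsub>Ms l0\<^esub>)}" using m(2) z1 by simp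
    also have "\<dots> = R``{(l0, z \<one>\<^bsub>M\<^esub> \<otimes>\<^bsub>Ms l0\<^esub> \<one>\<^bsub>Ms l0\<^esub>)}" using mulz z1 o by blast
    also have "\<dots> = R``{(l0, z \<one>\<^bsub>M\<^esub>)}" using monoid.r_one[OF mon[OF l0(1)]] z1 by simp
    finally have "R``{(l0, \<one>\<^bsub>Ms l0\<^esub>)} = R``{(l0, z \<one>\<^bsub>M\<^esub>)}" using m(2) by simp
    moreover have "(l0, z \<one>\<^bsub>M\<^esub>) \<in> S" "(l0, \<one>\<^bsub>Ms l0\<^esub>) \<in> S" using z1 o l0 by auto
    ultimately have "((l0, z \<one>\<^bsub>M\<^esub>), (l0, \<one>\<^bsub>Ms l0\<^esub>)) \<in> R"
      using eq_equiv_class_iff[OF R_equiv] by metis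
    then show ?thesis using R_up l0 lrefl by blast
  qed
  define w where "w q = (SOME p. p\<in>I \<and> leq l0 p \<and> \<psi> p l0 (z (fst q \<otimes>\<^bsub>M\<^esub> snd q)) = \<psi> p l0 (z (fst q) \<otimes>\<^bsub>Ms l0\<^esub> z (snd q)))" for q
  have w: "w q \<in> I \<and> leq l0 (w q) \<and> \<psi> (w q) l0 (z (fst q \<otimes>\<^bsub>M\<^esub> snd q)) = \<psi> (w q) l0 (z (fst q) \<otimes>\<^bsub>Ms l0\<^esub> z (snd q))"
    if "q \<in> K \<times> K" for q
    unfolding w_def apply (rule someI_ex) using prod that by (cases q) (auto simp: Bex_def)
  obtain w1 where w1: "w1 \<in> I" "leq l0 w1" "\<psi> w1 l0 (z \<one>\<^bsub>M\<^esub>) = \<psi> w1 l0 \<one>\<^bsub>Ms l0\<^esub>" using unit by blast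
  have F2: "insert l0 (insert w1 (w ` (K \<times> K))) \<subseteq> I" using w w1 l0 by auto
  obtain Lx where Lx: "Lx \<in> I" "\<forall>i\<in>insert l0 (insert w1 (w ` (K \<times> K))). leq i Lx"
    using fin_ub[OF _ F2] a by auto
  have l0Lx: "leq l0 Lx" using Lx by auto
  define y where "y m = \<psi> Lx l0 (z m)" for m
  have yc: "y m \<in> carrier (Ms Lx)" if "m \<in> K'" for m
    unfolding y_def using psi_closed[OF l0(1) Lx(1) l0Lx] z that by auto
  have ymul: "y (k1 \<otimes>\<^bsub>M\<^esub> k2) = y k1 \<otimes>\<^bsub>Ms Lx\<^esub> y k2" if "k1 \<in> K" "k2 \<in> K" for k1 k2
  proof -
    let ?p = "w (k1, k2)"
    have p: "?p \<in> I" "leq l0 ?p" "\<psi> ?p l0 (z (k1 \<otimes>\<^bsub>M\<^esub> k2)) = \<psi> ?p l0 (z k1 \<otimes>\<^bsub>Ms l0\<^esub> z k2)"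
      using w[of "(k1,k2)"] that by auto
    have pL: "leq ?p Lx" using Lx that by auto
    have c1: "z (k1 \<otimes>\<^bsub>M\<^esub> k2) \<in> carrier (Ms l0)" using z KK'(2)[OF that] by auto
    have c2: "z k1 \<otimes>\<^bsub>Ms l0\<^esub> z k2 \<in> carrier (Ms l0)" using zcl KK' that by auto
    have "y (k1 \<otimes>\<^bsub>M\<^esub> k2) = \<psi> Lx ?p (\<psi> ?p l0 (z (k1 \<otimes>\<^bsub>M\<^esub> k2)))"
      unfolding y_def using psi_comp[OF l0(1) p(1) Lx(1) p(2) pL c1] by simp
    also have "\<dots> = \<psi> Lx ?p (\<psi> ?p l0 (z k1 \<otimes>\<^bsub>Ms l0\<^esub> z k2))" using p by simp
    also have "\<dots> = \<psi> Lx l0 (z k1 \<otimes>\<^bsub>Ms l0\<^esub> z k2)" using psi_comp[OF l0(1) p(1) Lx(1) p(2) pL c2] by simp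
    also have "\<dots> = y k1 \<otimes>\<^bsub>Ms Lx\<^esub> y k2" unfolding y_def
      using psi_mult[OF l0(1) Lx(1) l0Lx] z KK' that by auto
    finally show ?thesis .
  qed
  have yone: "y \<one>\<^bsub>M\<^esub> = \<one>\<^bsub>Ms Lx\<^esub>"
  proof -
    have pL: "leq w1 Lx" using Lx by auto
    have c1: "z \<one>\<^bsub>M\<^esub> \<in> carrier (Ms l0)" using z KK' by auto
    have o: "\<one>\<^bsub>Ms l0\<^esub> \<in> carrier (Ms l0)" using monoid.one_closed[OF mon[OF l0(1)]] .
    have "y \<one>\<^bsub>M\<^esub> = \<psi> Lx w1 (\<psi> w1 l0 (z \<one>\<^bsub>M\<^esub>))"
      unfolding y_def using psi_comp[OF l0(1) w1(1) Lx(1) w1(2) pL c1] by simp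
    also have "\<dots> = \<psi> Lx w1 (\<psi> w1 l0 \<one>\<^bsub>Ms l0\<^esub>)" using w1 by simp
    also have "\<dots> = \<one>\<^bsub>Ms Lx\<^esub>" using psi_one l0 w1 Lx pL by simp
    finally show ?thesis .
  qed
  have yinj: "y k1 \<noteq> y k2" if "k1 \<in> K" "k2 \<in> K" "k1 \<noteq> k2" for k1 k2
  proof
    assume e: "y k1 = y k2"
    have kk: "k1 \<in> K'" "k2 \<in> K'" using KK' that by auto
    have "\<psi> Lx l0 (z k1) = \<psi> Lx l0 (z k2)" using e unfolding y_def .
    then have "((l0, z k1), (l0, z k2)) \<in> R" unfolding R_iff using l0(1) Lx(1) l0Lx z[OF kk(1)] z[OF kk(2)]
      by blast
    then have "R``{(l0, z k1)} = R``{(l0, z k2)}" using equiv_class_eq[OF R_equiv] by blast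
    then have "h k1 = h k2" using z[OF kk(1)] z[OF kk(2)] by simp
    moreover have "inj_on h (carrier M)" using hbij unfolding bij_betw_def by auto
    ultimately show False using that a unfolding inj_on_def by blast
  qed
  have so: "sofic (Ms Lx)" using sof Lx by auto
  have yK: "y ` K' \<subseteq> carrier (Ms Lx) \<and> finite (y ` K') \<and> \<epsilon> > 0" using yc K'fin a by auto
  have "\<exists>n::nat. \<exists>\<phi>s::'a \<Rightarrow> nat \<Rightarrow> nat. n > 0 \<and> (\<forall>m\<in>carrier (Ms Lx). maps_into n (\<phi>s m)) \<and>
    is_K_injective (y ` K') (1 - \<epsilon>) n \<phi>s \<and> is_KE_morphism (Ms Lx) (y ` K') \<epsilon> n \<phi>s"
    using so[unfolded sofic_def, rule_format, OF yK] .
  then obtain n \<phi>s where n: "n > 0" "\<forall>m\<in>carrier (Ms Lx). maps_into n (\<phi>s m)"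
    "is_K_injective (y ` K') (1 - \<epsilon>) n \<phi>s" "is_KE_morphism (Ms Lx) (y ` K') \<epsilon> n \<phi>s"
    by blast
  define \<phi> where "\<phi> m = (if m \<in> K' then \<phi>s (y m) else id)" for m
  have "\<forall>m\<in>carrier M. maps_into n (\<phi> m)"
    using n(2) yc unfolding \<phi>_def maps_into_def by auto
  moreover have "is_K_injective K (1 - \<epsilon>) n \<phi>"
    unfolding is_K_injective_def
  proof (intro ballI impI)
    fix k1 k2 assume k: "k1 \<in> K" "k2 \<in> K" "k1 \<noteq> k2"
    then show "1 - \<epsilon> \<le> hamming n (\<phi> k1) (\<phi> k2)"
      using n(3) yinj[OF k] KK' unfolding is_K_injective_def \<phi>_def by auto
  qed
  moreover have "is_KE_morphism M K \<epsilon> n \<phi>"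
    unfolding is_KE_morphism_def
  proof
    show "\<forall>k1\<in>K. \<forall>k2\<in>K. hamming n (\<phi> (k1 \<otimes>\<^bsub>M\<^esub> k2)) (\<phi> k1 \<circ> \<phi> k2) \<le> \<epsilon>"
    proof (intro ballI)
      fix k1 k2 assume k: "k1 \<in> K" "k2 \<in> K"
      have "\<phi> (k1 \<otimes>\<^bsub>M\<^esub> k2) = \<phi>s (y k1 \<otimes>\<^bsub>Ms Lx\<^esub> y k2)" unfolding \<phi>_def using KK' k ymul by auto
      moreover have "\<phi> k1 = \<phi>s (y k1)" "\<phi> k2 = \<phi>s (y k2)" unfolding \<phi>_def using KK' k by auto
      moreover have "y k1 \<in> y ` K'" "y k2 \<in> y ` K'" using KK' k by auto
      ultimately show "hamming n (\<phi> (k1 \<otimes>\<^bsub>M\<^esub> k2)) (\<phi> k1 \<circ> \<phi> k2) \<le> \<epsilon>"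
        using n(4) unfolding is_KE_morphism_def by auto
    qed
    show "hamming n (\<phi> \<one>\<^bsub>M\<^esub>) id \<le> \<epsilon>"
      using n(4) KK' yone unfolding is_KE_morphism_def \<phi>_def by auto
  qed
  ultimately show "\<exists>n \<phi>. 0 < n \<and> (\<forall>m\<in>carrier M. maps_into n (\<phi> m)) \<and>
     is_K_injective K (1 - \<epsilon>) n \<phi> \<and> is_KE_morphism M K \<epsilon> n \<phi>" using n(1) by blast
qed

end

theorem proposition3p10:
  fixes I :: "'i set" and leq :: "'i \<Rightarrow> 'i \<Rightarrow> bool"
    and Ms :: "'i \<Rightarrow> ('a, 'b) monoid_scheme" and \<psi> :: "'i \<Rightarrow> 'i \<Rightarrow> 'a \<Rightarrow> 'a"
    and M :: "('c, 'd) monoid_scheme"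
  assumes "inductive_system I leq Ms \<psi>"
    and "\<forall>i\<in>I. sofic (Ms i)"
    and "monoid M"
    and "M \<cong> ind_limit I leq Ms \<psi>"
  shows "sofic M"
proof -
  interpret indsys I leq Ms \<psi> using assms(1) by unfold_locales
  obtain h where "h \<in> iso M (ind_limit I leq Ms \<psi>)" using assms(4) unfolding is_iso_def by auto
  then show ?thesis using main assms(2,3) by blast
qed

end
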